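(* Let $\mathbf L\in\mathbb R_+^{n\times k}$. Then $\mathrm{CCdim}(\mathbf L)\le\operatorname{affdim}(\mathbf L)$.
   Context: Notation: $[m]=\{1,\dots,m\}$; $\Delta_n=\{\mathbf p\in\mathbb R_+^n:\sum_i p_i=1\}$. A loss matrix $\mathbf L\in\mathbb R_+^{n\times k}$ has columns $\boldsymbol\ell_t$, $t\in[k]$. Standing assumption: for each $t\in[k]$ there is $\mathbf p\in\Delta_n$ with $\operatorname{argmin}_{t'}\mathbf p^\top\boldsymbol\ell_{t'}=\{t\}$. $\operatorname{affdim}(\mathbf L)$ is the dimension of the affine hull of $\{\boldsymbol\ell_1,\dots,\boldsymbol\ell_k\}$ (i.e. of the linear subspace parallel to it). A surrogate loss $\boldsymbol\psi:\mathcal C\to\mathbb R_+^n$ ($\mathcal C\subseteq\mathbb R^d$ convex) is $\mathbf L$-calibrated if there is $\mathrm{pred}:\mathcal C\to[k]$ such that for all $\mathbf p\in\Delta_n$: $\inf_{\mathbf u\in\mathcal C:\mathrm{pred}(\mathbf u)\notin\operatorname{argmin}_t\mathbf p^\top\boldsymbol\ell_t}\mathbf p^\top\boldsymbol\psi(\mathbf u)>\inf_{\mathbf u\in\mathcal C}\mathbf p^\top\boldsymbol\psi(\mathbf u)$. $\mathrm{CCdim}(\mathbf L)$ is the smallest $d\in\mathbb Z_+$ for which there exist a convex set $\mathcal C\subseteq\mathbb R^d$ and a convex (componentwise convex) $\mathbf L$-calibrated surrogate $\boldsymbol\psi:\mathcal C\to\mathbb R_+^n$ ($\infty$ if none exists).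 *)

theory Defs
  imports "HOL-Analysis.Analysis" "HOL-Library.Extended_Nat" "HOL-Library.Extended_Real"
begin

text \<open>A loss matrix L in R_+^{n x k} is represented by its columns:
  L t :: real^'n for t in {1..k}. Outcomes are indexed by the finite type 'n (n = CARD('n)).\<close>

definition prob_simplex :: "(real^'n) set" where
  "prob_simplex = {p. (\<forall>i. 0 \<le> p $ i) \<and> (\<Sum>i\<in>UNIV. p $ i) = 1}"

definition argmin_loss :: "(nat \<Rightarrow> real^'n) \<Rightarrow> nat \<Rightarrow> real^'n \<Rightarrow> nat set" where
  "argmin_loss L k p = {t\<in>{1..k}. \<forall>t'\<in>{1..k}. p \<bullet> L t \<le> p \<bullet> L t'}"

definition affdim :: "(nat \<Rightarrow> real^'n) \<Rightarrow> nat \<Rightarrow> int" where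
  "affdim L k = aff_dim (L ` {1..k})"

text \<open>R^d is represented as the functions nat => real vanishing outside {1..d}.\<close>
definition Rd :: "nat \<Rightarrow> (nat \<Rightarrow> real) set" where
  "Rd d = {u. \<forall>i. i \<notin> {1..d} \<longrightarrow> u i = 0}"

definition convex_fset :: "(nat \<Rightarrow> real) set \<Rightarrow> bool" where
  "convex_fset C \<longleftrightarrow> (\<forall>u\<in>C. \<forall>v\<in>C. \<forall>\<theta>::real. 0 \<le> \<theta> \<and> \<theta> \<le> 1 \<longrightarrow>
      (\<lambda>i. \<theta> * u i + (1 - \<theta>) * v i) \<in> C)"

definition componentwise_convex_on :: "(nat \<Rightarrow> real) set \<Rightarrow> ((nat \<Rightarrow> real) \<Rightarrow> real^'n) \<Rightarrow> bool" where
  "componentwise_convex_on C psi \<longleftrightarrow> (\<forall>j. \<forall>u\<in>C. \<forall>v\<in>C. \<forall>\<theta>::real. 0 \<le> \<theta> \<and> \<theta> \<le> 1 \<longrightarrow>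
      psi (\<lambda>i. \<theta> * u i + (1 - \<theta>) * v i) $ j \<le> \<theta> * psi u $ j + (1 - \<theta>) * psi v $ j)"

definition calibrated :: "(nat \<Rightarrow> real^'n) \<Rightarrow> nat \<Rightarrow> (nat \<Rightarrow> real) set \<Rightarrow> ((nat \<Rightarrow> real) \<Rightarrow> real^'n) \<Rightarrow> bool" where
  "calibrated L k C psi \<longleftrightarrow> (\<exists>pred :: (nat \<Rightarrow> real) \<Rightarrow> nat. (\<forall>u\<in>C. pred u \<in> {1..k}) \<and>
     (\<forall>p\<in>prob_simplex.
        (INF u\<in>{u\<in>C. pred u \<notin> argmin_loss L k p}. ereal (p \<bullet> psi u))
          > (INF u\<in>C. ereal (p \<bullet> psi u))))"

definition CCdim :: "(nat \<Rightarrow> real^'n) \<Rightarrow> nat \<Rightarrow> enat" where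
  "CCdim L k = Inf {enat d | d. \<exists>(C :: (nat \<Rightarrow> real) set) (psi :: (nat \<Rightarrow> real) \<Rightarrow> real^'n).
      C \<subseteq> Rd d \<and> convex_fset C \<and> (\<forall>u\<in>C. \<forall>j. 0 \<le> psi u $ j) \<and>
      componentwise_convex_on C psi \<and> calibrated L k C psi}"

end

theory Submission
  imports Defs
begin

lemma exists_big_weight:
  fixes lam :: "nat \<Rightarrow> real"
  assumes "k \<ge> 1" "sum lam {1..k} = 1"
  shows "\<exists>t\<in>{1..k}. lam t \<ge> 1 / real k"
proof (rule ccontr)
  assume "\<not> ?thesis"
  then have "\<forall>t\<in>{1..k}. lam t < 1 / real k" by auto
  then have "sum lam {1..k} < sum (\<lambda>_. 1 / real k) {1..k}"
    using assms by (intro sum_strict_mono) auto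
  then show False using assms by simp
qed

theorem mainTheorem8:
  fixes L :: "nat \<Rightarrow> real^'n" and k :: nat
  assumes "k \<ge> 1"
    and "\<forall>t\<in>{1..k}. \<forall>i. 0 \<le> L t $ i"
    and "\<forall>t\<in>{1..k}. \<exists>p\<in>prob_simplex. argmin_loss L k p = {t}"
  shows "CCdim L k \<le> enat (nat (affdim L k))"
proof -
  define S where "S = L ` {1..k}"
  define V where "V = (+) (- L 1) ` S"
  have L1: "L 1 \<in> S" using assms(1) by (auto simp: S_def)
  have aff: "affdim L k = int (dim V)"
    unfolding affdim_def V_def S_def[symmetric]
    by (rule aff_dim_eq_dim[OF hull_inc[OF L1]])
  obtain B where B: "B \<subseteq> V" "independent B" "V \<subseteq> span B" "card B = dim V"
    using basis_exists by blast
  have finB: "finite B" using B(2) independent_bound by blast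
  define d where "d = dim V"
  obtain b where bb: "bij_betw b {1..d} B"
    using ex_bij_betw_nat_finite_1[OF finB] B(4) d_def by auto
  define A where "A = (\<lambda>u::nat\<Rightarrow>real. L 1 + (\<Sum>i\<in>{1..d}. u i *\<^sub>R b i))"
  define W where "W = (\<lambda>z. {lam :: nat \<Rightarrow> real. (\<forall>s\<in>{1..k}. 0 \<le> lam s) \<and> sum lam {1..k} = 1
      \<and> (\<Sum>s\<in>{1..k}. lam s *\<^sub>R L s) = z})"
  define C where "C = {u \<in> Rd d. W (A u) \<noteq> {}}"
  define pred where "pred = (\<lambda>u. SOME t. t \<in> {1..k} \<and> (\<exists>lam\<in>W (A u). lam t \<ge> 1 / real k))"
  have reach: "\<exists>u\<in>Rd d. A u = L t" if t: "t \<in> {1..k}" for t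
  proof -
    have "L t - L 1 \<in> V" using t by (auto simp: V_def S_def)
    then have "L t - L 1 \<in> span B" using B(3) by blast
    then obtain c where c: "L t - L 1 = (\<Sum>x\<in>B. c x *\<^sub>R x)"
      using span_finite[OF finB] by auto
    define u where "u = (\<lambda>i. if i \<in> {1..d} then c (b i) else 0)"
    have "(\<Sum>x\<in>B. c x *\<^sub>R x) = (\<Sum>i\<in>{1..d}. c (b i) *\<^sub>R b i)"
      using sum.reindex_bij_betw[OF bb, of "\<lambda>x. c x *\<^sub>R x"] by simp
    also have "\<dots> = (\<Sum>i\<in>{1..d}. u i *\<^sub>R b i)" by (simp add: u_def)
    finally have "A u = L t" using c by (simp add: A_def algebra_simps)
    moreover have "u \<in> Rd d" by (simp add: Rd_def u_def)
    ultimately show ?thesis by blast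
  qed
  have Wt: "(\<lambda>s. if s = t then 1 else 0) \<in> W (L t)" if t: "t \<in> {1..k}" for t
    using t by (simp add: W_def if_distrib[of "\<lambda>x. x *\<^sub>R _"] sum.delta cong: if_cong)
  have Acomb: "A (\<lambda>i. \<theta> * u i + (1 - \<theta>) * v i) = \<theta> *\<^sub>R A u + (1 - \<theta>) *\<^sub>R A v" for \<theta> u v
  proof -
    have "(\<Sum>i\<in>{1..d}. (\<theta> * u i + (1 - \<theta>) * v i) *\<^sub>R b i)
        = \<theta> *\<^sub>R (\<Sum>i\<in>{1..d}. u i *\<^sub>R b i) + (1 - \<theta>) *\<^sub>R (\<Sum>i\<in>{1..d}. v i *\<^sub>R b i)"
      by (simp add: scaleR_add_left sum.distrib scaleR_sum_right)
    moreover have "L 1 = \<theta> *\<^sub>R L 1 + (1 - \<theta>) *\<^sub>R L 1"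
      by (simp add: scaleR_diff_left)
    ultimately show ?thesis unfolding A_def by (simp add: scaleR_add_right)
  qed
  have nonneg: "\<forall>u\<in>C. \<forall>j. 0 \<le> A u $ j"
  proof (intro ballI allI)
    fix u j assume "u \<in> C"
    then obtain lam where lam: "lam \<in> W (A u)" by (auto simp: C_def)
    then have "A u = (\<Sum>s\<in>{1..k}. lam s *\<^sub>R L s)" by (simp add: W_def)
    then have "A u $ j = (\<Sum>s\<in>{1..k}. lam s * L s $ j)" by simp
    also have "\<dots> \<ge> 0" using lam assms(2) by (intro sum_nonneg) (auto simp: W_def)
    finally show "0 \<le> A u $ j" .
  qed
  have convC: "convex_fset C"
    unfolding convex_fset_def
  proof (intro ballI allI impI)
    fix u v \<theta> assume u: "u \<in> C" and v: "v \<in> C" and th: "0 \<le> \<theta> \<and> \<theta> \<le> (1::real)"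
    obtain lu where lu: "lu \<in> W (A u)" using u by (auto simp: C_def)
    obtain lv where lv: "lv \<in> W (A v)" using v by (auto simp: C_def)
    have "(\<lambda>s. \<theta> * lu s + (1 - \<theta>) * lv s) \<in> W (A (\<lambda>i. \<theta> * u i + (1 - \<theta>) * v i))"
    proof -
      have a: "sum lu {1..k} = 1" "(\<Sum>s\<in>{1..k}. lu s *\<^sub>R L s) = A u" "\<forall>s\<in>{1..k}. 0 \<le> lu s"
        using lu by (auto simp: W_def)
      have b: "sum lv {1..k} = 1" "(\<Sum>s\<in>{1..k}. lv s *\<^sub>R L s) = A v" "\<forall>s\<in>{1..k}. 0 \<le> lv s"
        using lv by (auto simp: W_def)
      have "(\<Sum>s\<in>{1..k}. \<theta> * lu s + (1 - \<theta>) * lv s) = \<theta> * sum lu {1..k} + (1 - \<theta>) * sum lv {1..k}"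
        by (simp add: sum.distrib sum_distrib_left)
      moreover have "(\<Sum>s\<in>{1..k}. (\<theta> * lu s + (1 - \<theta>) * lv s) *\<^sub>R L s)
          = \<theta> *\<^sub>R (\<Sum>s\<in>{1..k}. lu s *\<^sub>R L s) + (1 - \<theta>) *\<^sub>R (\<Sum>s\<in>{1..k}. lv s *\<^sub>R L s)"
        by (simp add: sum.distrib scaleR_add_left scaleR_sum_right)
      moreover have "\<forall>s\<in>{1..k}. 0 \<le> \<theta> * lu s + (1 - \<theta>) * lv s"
        using a(3) b(3) th by simp
      ultimately show ?thesis unfolding Acomb W_def using a b by simp
    qed
    moreover have "(\<lambda>i. \<theta> * u i + (1 - \<theta>) * v i) \<in> Rd d" using u v by (auto simp: C_def Rd_def)
    ultimately show "(\<lambda>i. \<theta> * u i + (1 - \<theta>) * v i) \<in> C" by (auto simp: C_def)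
  qed
  have ccv: "componentwise_convex_on C A"
    unfolding componentwise_convex_on_def by (simp add: Acomb)
  have predC: "pred u \<in> {1..k} \<and> (\<exists>lam\<in>W (A u). lam (pred u) \<ge> 1 / real k)" if uC0: "u \<in> C" for u
  proof -
    obtain lam where lam: "lam \<in> W (A u)" using uC0 unfolding C_def by blast
    then obtain t where "t \<in> {1..k}" "lam t \<ge> 1 / real k"
      using exists_big_weight[OF assms(1), of lam] lam unfolding W_def by blast
    then have "\<exists>t. t \<in> {1..k} \<and> (\<exists>lam\<in>W (A u). lam t \<ge> 1 / real k)" using lam by blast
    then show ?thesis unfolding pred_def by (rule someI_ex)
  qed
  have cal: "calibrated L k C A"
    unfolding calibrated_def
  proof (intro exI[of _ pred] conjI ballI)
    fix u assume "u \<in> C" then show "pred u \<in> {1..k}" using predC by blast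
  next
    fix p :: "real^'n" assume p: "p \<in> prob_simplex"
    define m where "m = Min ((\<lambda>s. p \<bullet> L s) ` {1..k})"
    have mle: "m \<le> p \<bullet> L s" if "s \<in> {1..k}" for s using that by (simp add: m_def)
    obtain t0 where t0: "t0 \<in> {1..k}" "p \<bullet> L t0 = m"
    proof -
      have "m \<in> (\<lambda>s. p \<bullet> L s) ` {1..k}" unfolding m_def
        using assms(1) by (intro Min_in) auto
      then show ?thesis using that by blast
    qed
    have argm: "argmin_loss L k p = {t\<in>{1..k}. p \<bullet> L t = m}"
      unfolding argmin_loss_def using mle t0 by (auto intro: antisym)
    obtain u0 where u0: "u0 \<in> Rd d" "A u0 = L t0" using reach[OF t0(1)] by blast
    have u0C: "u0 \<in> C" using u0 Wt[OF t0(1)] by (auto simp: C_def)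
    have lowC: "(INF u\<in>C. ereal (p \<bullet> A u)) \<le> ereal m"
      using INF_lower[OF u0C, of "\<lambda>u. ereal (p \<bullet> A u)"] u0 t0 by simp
    define Bad where "Bad = {t\<in>{1..k}. p \<bullet> L t \<noteq> m}"
    show "(INF u\<in>C. ereal (p \<bullet> A u)) < (INF u\<in>{u\<in>C. pred u \<notin> argmin_loss L k p}. ereal (p \<bullet> A u))"
    proof (cases "Bad = {}")
      case True
      then have E: "{u\<in>C. pred u \<notin> argmin_loss L k p} = {}" using predC by (auto simp: argm Bad_def)
      have "(INF u\<in>{u\<in>C. pred u \<notin> argmin_loss L k p}. ereal (p \<bullet> A u)) = \<infinity>"
        unfolding E by (simp add: top_ereal_def)
      moreover have "(INF u\<in>C. ereal (p \<bullet> A u)) < \<infinity>"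
        by (rule le_less_trans[OF lowC]) simp
      ultimately show ?thesis by simp
    next
      case False
      define g where "g = Min ((\<lambda>s. p \<bullet> L s - m) ` Bad)"
      have gpos: "g > 0" using False mle unfolding g_def Bad_def
        by (subst Min_gr_iff) force+
      have gle: "g \<le> p \<bullet> L s - m" if "s \<in> Bad" for s using that by (simp add: g_def Bad_def)
      have "ereal (m + g / real k) \<le> (INF u\<in>{u\<in>C. pred u \<notin> argmin_loss L k p}. ereal (p \<bullet> A u))"
      proof (rule INF_greatest)
        fix u assume "u \<in> {u\<in>C. pred u \<notin> argmin_loss L k p}"
        then have uC: "u \<in> C" and np: "pred u \<notin> argmin_loss L k p" by auto
        obtain lam where lam: "lam \<in> W (A u)" and big: "lam (pred u) \<ge> 1 / real k"
          and pk: "pred u \<in> {1..k}" using predC[OF uC] by blast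
        define t where "t = pred u"
        have tB: "t \<in> Bad" using np pk by (auto simp: t_def argm Bad_def)
        have lam0: "\<forall>s\<in>{1..k}. 0 \<le> lam s" and lam1: "sum lam {1..k} = 1"
          and lamA: "(\<Sum>s\<in>{1..k}. lam s *\<^sub>R L s) = A u" using lam by (auto simp: W_def)
        have "p \<bullet> A u = (\<Sum>s\<in>{1..k}. lam s * (p \<bullet> L s))"
          using lamA[symmetric] by (simp add: inner_sum_right)
        also have "\<dots> = (\<Sum>s\<in>{1..k}. lam s * m) + (\<Sum>s\<in>{1..k}. lam s * (p \<bullet> L s - m))"
          by (simp add: sum.distrib[symmetric] algebra_simps)
        also have "(\<Sum>s\<in>{1..k}. lam s * m) = m" using lam1 by (simp add: sum_distrib_right[symmetric])
        also have "(\<Sum>s\<in>{1..k}. lam s * (p \<bullet> L s - m)) \<ge> lam t * (p \<bullet> L t - m)"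
        proof -
          have "(\<Sum>s\<in>{t}. lam s * (p \<bullet> L s - m)) \<le> (\<Sum>s\<in>{1..k}. lam s * (p \<bullet> L s - m))"
            using tB lam0 mle by (intro sum_mono2) (auto simp: Bad_def)
          then show ?thesis by simp
        qed
        moreover have "lam t * (p \<bullet> L t - m) \<ge> (1 / real k) * g"
          using big gle[OF tB] gpos lam0 pk by (intro mult_mono) (auto simp: t_def)
        ultimately have "m + g / real k \<le> p \<bullet> A u" by simp
        then show "ereal (m + g / real k) \<le> ereal (p \<bullet> A u)" by simp
      qed
      moreover have "ereal m < ereal (m + g / real k)" using gpos assms(1) by simp
      ultimately show ?thesis using lowC by (meson order.strict_trans1 order.strict_trans2)
    qed
  qed
  have "enat d \<in> {enat d | d. \<exists>(C :: (nat \<Rightarrow> real) set) (psi :: (nat \<Rightarrow> real) \<Rightarrow> real^'n).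
      C \<subseteq> Rd d \<and> convex_fset C \<and> (\<forall>u\<in>C. \<forall>j. 0 \<le> psi u $ j) \<and>
      componentwise_convex_on C psi \<and> calibrated L k C psi}"
  proof -
    have Csub: "C \<subseteq> Rd d" by (auto simp: C_def)
    show ?thesis using convC nonneg ccv cal Csub by blast
  qed
  then have "CCdim L k \<le> enat d" unfolding CCdim_def by (rule Inf_lower)
  then show ?thesis using aff d_def by simp
qed

end
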